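(* Assume every node of $G$ belongs to at least one $h$-clique. Let $f^*$ be any maximum flow in $\mathcal{H}$. Then in the residual graph $\mathcal{H}_{f^*}$ there is a directed path from $t$ to every node $\lambda\in\Lambda$.
   Context: Let $G=(V,E)$ be a finite simple undirected graph and $h\ge2$. An $h$-clique is a set of $h$ pairwise adjacent nodes; $\mu_h(G[W])$ counts $h$-cliques inside $W$; for nonempty $W$, $\rho_h(W)=\mu_h(G[W])/|W|$; $\rho_h^*=\max_{\emptyset\ne W\subseteq V}\rho_h(W)$; $deg_G(v,h)$ is the number of $h$-cliques containing $v$; $\Lambda$ is the set of $(h-1)$-cliques of $G$ contained in some $h$-clique. Flow network $\mathcal{H}=(V_\mathcal{H},E_\mathcal{H},c)$: $V_\mathcal{H}=V\cup\Lambda\cup\{s,t\}$; for $v\in V$: arcs $(s,v)$ cap. $deg_G(v,h)$, $(v,t)$ cap. $h\rho_h^*$, $(v,s),(t,v)$ cap. $0$; for $\lambda\in\Lambda$, $v\in\lambda$: $(\lambda,v)$ cap. $+\infty$, $(v,\lambda)$ cap. $0$; for $\lambda\in\Lambda$, $v\in V$ with $\lambda\cup\{v\}$ an $h$-clique: $(v,\lambda)$ cap. $1$, $(\lambda,v)$ cap. $0$; no other arcs. A flow $f$ satisfies $f(u,v)\le c(u,v)$, $f(v,u)=-f(u,v)$, conservation at nodes other than $s,t$; value $\sum_v f(s,v)$. The residual graph $\mathcal{H}_{f}$ has an arc $(u,v)$ whenever $(u,v)\in E_\mathcal{H}$ and $c(u,v)-f(u,v)>0$. *)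

theory Defs
  imports Complex_Main "HOL-Library.Extended_Real"
begin

definition simple_graph :: "'a set \<Rightarrow> ('a \<Rightarrow> 'a \<Rightarrow> bool) \<Rightarrow> bool" where
  "simple_graph V E \<longleftrightarrow> finite V \<and> (\<forall>u v. E u v \<longrightarrow> u \<in> V \<and> v \<in> V)
     \<and> (\<forall>u v. E u v \<longrightarrow> E v u) \<and> (\<forall>u. \<not> E u u)"

definition is_clique :: "'a set \<Rightarrow> ('a \<Rightarrow> 'a \<Rightarrow> bool) \<Rightarrow> nat \<Rightarrow> 'a set \<Rightarrow> bool" where
  "is_clique V E h K \<longleftrightarrow> K \<subseteq> V \<and> finite K \<and> card K = h
     \<and> (\<forall>u\<in>K. \<forall>v\<in>K. u \<noteq> v \<longrightarrow> E u v)"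

definition mu :: "'a set \<Rightarrow> ('a \<Rightarrow> 'a \<Rightarrow> bool) \<Rightarrow> nat \<Rightarrow> 'a set \<Rightarrow> nat" where
  "mu V E h W = card {K. is_clique V E h K \<and> K \<subseteq> W}"

definition rho :: "'a set \<Rightarrow> ('a \<Rightarrow> 'a \<Rightarrow> bool) \<Rightarrow> nat \<Rightarrow> 'a set \<Rightarrow> real" where
  "rho V E h W = real (mu V E h W) / real (card W)"

definition rho_star :: "'a set \<Rightarrow> ('a \<Rightarrow> 'a \<Rightarrow> bool) \<Rightarrow> nat \<Rightarrow> real" where
  "rho_star V E h = Max {rho V E h W | W. W \<subseteq> V \<and> W \<noteq> {}}"

definition clique_deg :: "'a set \<Rightarrow> ('a \<Rightarrow> 'a \<Rightarrow> bool) \<Rightarrow> nat \<Rightarrow> 'a \<Rightarrow> nat" where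
  "clique_deg V E h v = card {K. is_clique V E h K \<and> v \<in> K}"

definition Lam :: "'a set \<Rightarrow> ('a \<Rightarrow> 'a \<Rightarrow> bool) \<Rightarrow> nat \<Rightarrow> 'a set set" where
  "Lam V E h = {l. is_clique V E (h - 1) l \<and> (\<exists>K. is_clique V E h K \<and> l \<subseteq> K)}"

datatype 'a node = Src | Snk | Vn 'a | Ln "'a set"

definition net_nodes :: "'a set \<Rightarrow> ('a \<Rightarrow> 'a \<Rightarrow> bool) \<Rightarrow> nat \<Rightarrow> 'a node set" where
  "net_nodes V E h = {Src, Snk} \<union> Vn ` V \<union> Ln ` Lam V E h"

definition net_arcs :: "'a set \<Rightarrow> ('a \<Rightarrow> 'a \<Rightarrow> bool) \<Rightarrow> nat \<Rightarrow> ('a node \<times> 'a node) set" where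
  "net_arcs V E h =
     {(Src, Vn v) | v. v \<in> V} \<union> {(Vn v, Snk) | v. v \<in> V}
   \<union> {(Vn v, Src) | v. v \<in> V} \<union> {(Snk, Vn v) | v. v \<in> V}
   \<union> {(Ln l, Vn v) | l v. l \<in> Lam V E h \<and> v \<in> l}
   \<union> {(Vn v, Ln l) | l v. l \<in> Lam V E h \<and> v \<in> l}
   \<union> {(Vn v, Ln l) | l v. l \<in> Lam V E h \<and> v \<in> V \<and> is_clique V E h (insert v l)}
   \<union> {(Ln l, Vn v) | l v. l \<in> Lam V E h \<and> v \<in> V \<and> is_clique V E h (insert v l)}"

text \<open>Capacities; pairs not listed (including listed zero-capacity arcs) get 0.\<close>
fun cap :: "'a set \<Rightarrow> ('a \<Rightarrow> 'a \<Rightarrow> bool) \<Rightarrow> nat \<Rightarrow> 'a node \<Rightarrow> 'a node \<Rightarrow> ereal" where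
  "cap V E h Src (Vn v) = (if v \<in> V then ereal (real (clique_deg V E h v)) else 0)"
| "cap V E h (Vn v) Snk = (if v \<in> V then ereal (real h * rho_star V E h) else 0)"
| "cap V E h (Ln l) (Vn v) = (if l \<in> Lam V E h \<and> v \<in> l then \<infinity> else 0)"
| "cap V E h (Vn v) (Ln l) =
     (if l \<in> Lam V E h \<and> v \<in> V \<and> is_clique V E h (insert v l) then 1 else 0)"
| "cap V E h _ _ = 0"

definition is_flow :: "'a set \<Rightarrow> ('a \<Rightarrow> 'a \<Rightarrow> bool) \<Rightarrow> nat \<Rightarrow> ('a node \<Rightarrow> 'a node \<Rightarrow> real) \<Rightarrow> bool" where
  "is_flow V E h f \<longleftrightarrow>
     (\<forall>u\<in>net_nodes V E h. \<forall>w\<in>net_nodes V E h. ereal (f u w) \<le> cap V E h u w)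
   \<and> (\<forall>u\<in>net_nodes V E h. \<forall>w\<in>net_nodes V E h. f w u = - f u w)
   \<and> (\<forall>u\<in>net_nodes V E h - {Src, Snk}. (\<Sum>w\<in>net_nodes V E h. f u w) = 0)"

definition flow_value :: "'a set \<Rightarrow> ('a node \<Rightarrow> 'a node \<Rightarrow> real) \<Rightarrow> real" where
  "flow_value V f = (\<Sum>v\<in>V. f Src (Vn v))"

definition is_max_flow :: "'a set \<Rightarrow> ('a \<Rightarrow> 'a \<Rightarrow> bool) \<Rightarrow> nat \<Rightarrow> ('a node \<Rightarrow> 'a node \<Rightarrow> real) \<Rightarrow> bool" where
  "is_max_flow V E h f \<longleftrightarrow> is_flow V E h f
     \<and> (\<forall>g. is_flow V E h g \<longrightarrow> flow_value V g \<le> flow_value V f)"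

definition residual_arcs :: "'a set \<Rightarrow> ('a \<Rightarrow> 'a \<Rightarrow> bool) \<Rightarrow> nat \<Rightarrow> ('a node \<Rightarrow> 'a node \<Rightarrow> real) \<Rightarrow> ('a node \<times> 'a node) set" where
  "residual_arcs V E h f = {(u, w). (u, w) \<in> net_arcs V E h \<and> cap V E h u w - ereal (f u w) > 0}"

end

theory Submission
  imports Defs
begin

lemma cap_nonneg:
  assumes "rho_star V E h \<ge> 0"
  shows "cap V E h a b \<ge> 0"
  using assms by (cases "(V,E,h,a,b)" rule: cap.cases) auto

lemma cap_arc:
  assumes "cap V E h a b \<noteq> 0"
  shows "(a,b) \<in> net_arcs V E h"
  using assms by (cases "(V,E,h,a,b)" rule: cap.cases) (auto simp: net_arcs_def split: if_splits)

lemma arcs_sym: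
  assumes "(a,b) \<in> net_arcs V E h"
  shows "(b,a) \<in> net_arcs V E h"
  using assms unfolding net_arcs_def by blast

lemma cap_Src: "cap V E h a Src = 0"
  by (cases a) auto

lemma net_nodes_finite:
  assumes "finite V" shows "finite (net_nodes V E h)"
proof -
  have "Lam V E h \<subseteq> Pow V" unfolding Lam_def is_clique_def by auto
  then have "finite (Lam V E h)" using assms by (meson finite_Pow_iff finite_subset)
  then show ?thesis using assms unfolding net_nodes_def by auto
qed

theorem lemma6:
  fixes V :: "'a set" and E :: "'a \<Rightarrow> 'a \<Rightarrow> bool" and h :: nat
    and f :: "'a node \<Rightarrow> 'a node \<Rightarrow> real"
  assumes "simple_graph V E" and "h \<ge> 2"
    and "\<forall>v\<in>V. \<exists>K. is_clique V E h K \<and> v \<in> K"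
    and "is_max_flow V E h f"
  shows "\<forall>l\<in>Lam V E h. (Snk, Ln l) \<in> (residual_arcs V E h f)\<^sup>+"
proof
  fix l assume lL: "l \<in> Lam V E h"
  define N where "N = net_nodes V E h"
  define A where "A = residual_arcs V E h f"
  define R where "R = {x. (Snk, x) \<in> A\<^sup>*}"
  define S where "S = N - R - {Src}"
  have finV: "finite V" using assms(1) unfolding simple_graph_def by auto
  have finN: "finite N" using net_nodes_finite[OF finV] N_def by simp
  have fl: "is_flow V E h f" using assms(4) unfolding is_max_flow_def by auto
  have capf: "\<And>a b. a \<in> N \<Longrightarrow> b \<in> N \<Longrightarrow> ereal (f a b) \<le> cap V E h a b"
    using fl unfolding is_flow_def N_def by blast
  have skew: "\<And>a b. a \<in> N \<Longrightarrow> b \<in> N \<Longrightarrow> f b a = - f a b"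
    using fl unfolding is_flow_def N_def by blast
  have cons: "\<And>a. a \<in> N - {Src, Snk} \<Longrightarrow> (\<Sum>w\<in>N. f a w) = 0"
    using fl unfolding is_flow_def N_def by blast
  obtain K where K: "is_clique V E h K" "l \<subseteq> K" and lc: "is_clique V E (h-1) l"
    using lL unfolding Lam_def by auto
  have cardl: "card l = h - 1" and cardK: "card K = h" and finK: "finite K"
    using K lc unfolding is_clique_def by auto
  have "K - l \<noteq> {}"
  proof
    assume "K - l = {}" then have "K \<subseteq> l" by auto
    then have "card K \<le> card l" using lc card_mono unfolding is_clique_def by blast
    then show False using cardl cardK assms(2) by simp
  qed
  then obtain u where u: "u \<in> K" "u \<notin> l" by auto
  have finl: "finite l" using finK K(2) finite_subset by auto
  have insK: "insert u l = K"
    by (rule card_subset_eq[OF finK]) (use u K(2) finl cardl cardK assms(2) in auto)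
  have uV: "u \<in> V" using K(1) u unfolding is_clique_def by auto
  have icl: "is_clique V E h (insert u l)" using insK K by simp
  have hrho: "real h * rho_star V E h \<ge> 1"
  proof -
    have KV: "K \<subseteq> V" "K \<noteq> {}" using K(1) u unfolding is_clique_def by auto
    have fin: "finite {rho V E h W | W. W \<subseteq> V \<and> W \<noteq> {}}"
    proof -
      have "{rho V E h W | W. W \<subseteq> V \<and> W \<noteq> {}} \<subseteq> rho V E h ` Pow V" by auto
      then show ?thesis using finV finite_subset by blast
    qed
    have "rho V E h K \<le> rho_star V E h"
      unfolding rho_star_def by (rule Max_ge[OF fin]) (use KV in auto)
    moreover have "mu V E h K \<ge> 1"
    proof -
      have "{K'. is_clique V E h K' \<and> K' \<subseteq> K} \<subseteq> Pow K" by auto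
      then have "finite {K'. is_clique V E h K' \<and> K' \<subseteq> K}" using finK finite_subset by blast
      moreover have "K \<in> {K'. is_clique V E h K' \<and> K' \<subseteq> K}" using K(1) by auto
      ultimately have "card {K'. is_clique V E h K' \<and> K' \<subseteq> K} > 0"
        using card_gt_0_iff by blast
      then show ?thesis unfolding mu_def by simp
    qed
    moreover have "rho V E h K = real (mu V E h K) / real h" unfolding rho_def using cardK by simp
    moreover have "real 1 / real h \<le> real (mu V E h K) / real h"
      by (rule divide_right_mono) (use \<open>mu V E h K \<ge> 1\<close> in auto)
    ultimately have "real 1 / real h \<le> rho_star V E h" by linarith
    then show ?thesis using assms(2) by (simp add: field_simps)
  qed
  have rs0: "rho_star V E h \<ge> 0"
  proof (rule ccontr)
    assume "\<not> rho_star V E h \<ge> 0"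
    then have "real h * rho_star V E h \<le> 0" by (simp add: mult_nonneg_nonpos)
    then show False using hrho by simp
  qed
  have degu: "real (clique_deg V E h u) \<ge> 1"
  proof -
    have "{K. is_clique V E h K \<and> u \<in> K} \<subseteq> Pow V" unfolding is_clique_def by auto
    then have "finite {K. is_clique V E h K \<and> u \<in> K}" using finV finite_subset by blast
    moreover have "K \<in> {K. is_clique V E h K \<and> u \<in> K}" using K(1) u by auto
    ultimately have "card {K. is_clique V E h K \<and> u \<in> K} > 0"
      using card_gt_0_iff by blast
    then have "clique_deg V E h u \<ge> 1" unfolding clique_deg_def by simp
    then show ?thesis by simp
  qed
  have SrcN: "Src \<in> N" and SnkN: "Snk \<in> N" and uN: "Vn u \<in> N" and lN: "Ln l \<in> N"
    using uV lL unfolding N_def net_nodes_def by auto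
  have SnkR: "Snk \<in> R" unfolding R_def by simp
  have nonpos: "f x w \<le> 0" if xS: "x \<in> S" and wN: "w \<in> N - S" for x w
  proof (cases "w = Src")
    case True
    have "ereal (f x w) \<le> 0" using capf[of x w] xS wN True cap_Src[of V E h x]
      unfolding S_def by auto
    then show ?thesis by simp
  next
    case False
    then have wR: "w \<in> R" and xN: "x \<in> N" and xR: "x \<notin> R" using wN xS unfolding S_def by auto
    have wNN: "w \<in> N" using wN by auto
    have nA: "(w, x) \<notin> A"
    proof
      assume "(w,x) \<in> A"
      then have "(Snk, x) \<in> A\<^sup>*" using wR unfolding R_def by auto
      then show False using xR unfolding R_def by auto
    qed
    show ?thesis
    proof (cases "(w,x) \<in> net_arcs V E h")
      case True
      then have "\<not> (cap V E h w x - ereal (f w x) > 0)" using nA unfolding A_def residual_arcs_def by auto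
      moreover have "cap V E h w x \<ge> 0" using cap_nonneg[OF rs0] .
      ultimately have "f w x \<ge> 0"
        by (cases "cap V E h w x") auto
      then show ?thesis using skew[OF xN wNN] by simp
    next
      case False
      then have "(x,w) \<notin> net_arcs V E h" using arcs_sym by blast
      then have "cap V E h x w = 0" using cap_arc by blast
      then show ?thesis using capf[OF xN wNN] by simp
    qed
  qed
  have SN: "S \<subseteq> N" unfolding S_def by auto
  have finS: "finite S" using finN SN finite_subset by blast
  have inner0: "(\<Sum>x\<in>S. \<Sum>w\<in>S. f x w) = 0"
  proof -
    have "(\<Sum>x\<in>S. \<Sum>w\<in>S. f x w) = (\<Sum>w\<in>S. \<Sum>x\<in>S. f x w)" by (rule sum.swap)
    also have "\<dots> = (\<Sum>w\<in>S. \<Sum>x\<in>S. - f w x)"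
      by (intro sum.cong refl) (meson SN skew subsetD)
    also have "\<dots> = - (\<Sum>x\<in>S. \<Sum>w\<in>S. f x w)" by (simp add: sum_negf)
    finally show ?thesis by simp
  qed
  have tot: "(\<Sum>x\<in>S. \<Sum>w\<in>N - S. f x w) = 0"
  proof -
    have "(\<Sum>x\<in>S. \<Sum>w\<in>N. f x w) = 0"
      using cons SnkR unfolding S_def by (intro sum.neutral) auto
    moreover have "\<And>x. (\<Sum>w\<in>N. f x w) = (\<Sum>w\<in>N - S. f x w) + (\<Sum>w\<in>S. f x w)"
      by (rule sum.subset_diff[OF SN finN])
    ultimately show ?thesis using inner0 by (simp add: sum.distrib)
  qed
  have zero: "f x w = 0" if "x \<in> S" "w \<in> N - S" for x w
  proof -
    have "(\<Sum>x\<in>S. \<Sum>w\<in>N - S. - f x w) = 0" using tot by (simp add: sum_negf)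
    moreover have "\<And>x. x \<in> S \<Longrightarrow> 0 \<le> (\<Sum>w\<in>N - S. - f x w)"
      by (rule sum_nonneg) (use nonpos in force)
    ultimately have "\<forall>x\<in>S. (\<Sum>w\<in>N - S. - f x w) = 0"
      using sum_nonneg_eq_0_iff[OF finS, of "\<lambda>x. \<Sum>w\<in>N - S. - f x w"] by blast
    then have "(\<Sum>w\<in>N - S. - f x w) = 0" using that by auto
    then have "\<forall>w\<in>N - S. - f x w = 0"
      using sum_nonneg_eq_0_iff[of "N - S" "\<lambda>w. - f x w"] finN nonpos that by auto
    then show ?thesis using that by auto
  qed
  show "(Snk, Ln l) \<in> (residual_arcs V E h f)\<^sup>+"
  proof (rule ccontr)
    assume nl: "(Snk, Ln l) \<notin> (residual_arcs V E h f)\<^sup>+"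
    have lR: "Ln l \<notin> R" using nl unfolding R_def A_def by (auto simp: rtrancl_eq_or_trancl)
    have lS: "Ln l \<in> S" using lR lN unfolding S_def by auto
    have capul: "cap V E h (Vn u) (Ln l) = 1" using lL uV icl by simp
    have arcul: "(Vn u, Ln l) \<in> net_arcs V E h" using lL uV icl unfolding net_arcs_def by blast
    have uS: "Vn u \<in> S"
    proof (rule ccontr)
      assume "Vn u \<notin> S"
      then have uR: "Vn u \<in> R" using uN unfolding S_def by auto
      have "f (Ln l) (Vn u) = 0" using zero[OF lS] uN \<open>Vn u \<notin> S\<close> by auto
      then have "f (Vn u) (Ln l) = 0" using skew[OF lN uN] by simp
      then have "(Vn u, Ln l) \<in> A" using capul arcul unfolding A_def residual_arcs_def by simp
      then have "Ln l \<in> R" using uR unfolding R_def by auto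
      then show False using lR by simp
    qed
    have SrcS: "Src \<notin> S" and SnkS: "Snk \<notin> S" using SnkR unfolding S_def by auto
    have f1: "f (Vn u) Src = 0" using zero[OF uS] SrcN SrcS by auto
    have f2: "f (Vn u) Snk = 0" using zero[OF uS] SnkN SnkS by auto
    have f1': "f Src (Vn u) = 0" using skew[OF uN SrcN] f1 by simp
    have f2': "f Snk (Vn u) = 0" using skew[OF uN SnkN] f2 by simp
    define d where "d = (\<lambda>a b. (if (a,b) = (Src, Vn u) then 1 else
       if (a,b) = (Vn u, Src) then -1 else if (a,b) = (Vn u, Snk) then 1 else
       if (a,b) = (Snk, Vn u) then -1 else (0::real)))"
    define g where "g = (\<lambda>a b. f a b + d a b)"
    have dskew: "d b a = - d a b" for a b unfolding d_def by auto
    have gflow: "is_flow V E h g"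
      unfolding is_flow_def N_def[symmetric]
    proof (intro conjI ballI)
      fix a b assume a: "a \<in> N" and b: "b \<in> N"
      show "g b a = - g a b" unfolding g_def using skew[OF a b] dskew[of b a] by simp
      show "ereal (g a b) \<le> cap V E h a b"
      proof (cases "d a b = 0")
        case True then show ?thesis using capf[OF a b] unfolding g_def by simp
      next
        case False
        then consider "(a,b) = (Src, Vn u)" | "(a,b) = (Vn u, Src)" | "(a,b) = (Vn u, Snk)"
          | "(a,b) = (Snk, Vn u)" unfolding d_def by (auto split: if_splits)
        then show ?thesis
        proof cases
          case 1 then show ?thesis using f1' degu uV unfolding g_def d_def by auto
        next
          case 2 then show ?thesis using f1 unfolding g_def d_def by auto
        next
          case 3 then show ?thesis using f2 hrho uV unfolding g_def d_def by auto
        next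
          case 4 then show ?thesis using f2' unfolding g_def d_def by auto
        qed
      qed
    next
      fix a assume a: "a \<in> N - {Src, Snk}"
      have "(\<Sum>w\<in>N. d a w) = 0"
      proof (cases "a = Vn u")
        case True
        have "(\<Sum>w\<in>N. d a w) = (\<Sum>w\<in>N. (if w = Snk then 1 else 0) + (if w = Src then -1 else 0))"
          by (intro sum.cong refl) (auto simp: d_def True)
        also have "\<dots> = 0" using finN SrcN SnkN by (simp add: sum.distrib)
        finally show ?thesis .
      next
        case False
        then have "\<And>w. d a w = 0" using a unfolding d_def by auto
        then show ?thesis by simp
      qed
      then show "(\<Sum>w\<in>N. g a w) = 0" using cons[OF a] unfolding g_def by (simp add: sum.distrib)
    qed
    have "flow_value V g = flow_value V f + 1"
    proof -
      have "flow_value V g = (\<Sum>v\<in>V. f Src (Vn v) + (if v = u then 1 else 0))"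
        unfolding flow_value_def g_def d_def by (intro sum.cong refl) auto
      also have "\<dots> = flow_value V f + 1" using finV uV
        unfolding flow_value_def by (simp add: sum.distrib)
      finally show ?thesis .
    qed
    moreover have "flow_value V g \<le> flow_value V f" using assms(4) gflow unfolding is_max_flow_def by auto
    ultimately show False by simp
  qed
qed

end
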